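(* Let $R\subseteq\{e,c,w\}$ and let $\{s_1,\ldots,s_n\}\cup\{x\Rightarrow\delta\}$ ($n\ge1$) be a finite set of $\mathcal L^0$-sequents (sequents not containing $!$). Then $\{s_1,\ldots,s_n\}\vdash_{\mathbf{InFNL}_R}x\Rightarrow\delta\iff\ \vdash_{\mathbf{NACCLL}^-_R}x\circ(\tau(s_1)\circ(\tau(s_2)\circ\cdots(\tau(s_{n-1})\circ\tau(s_n))\cdots))\Rightarrow\delta$, and $\{s_1,\ldots,s_n\}\vdash_{\mathbf{CyInFNL}_R}x\Rightarrow\delta\iff\ \vdash_{\mathbf{NACCLL}_R}x\circ(\tau(s_1)\circ(\tau(s_2)\circ\cdots(\tau(s_{n-1})\circ\tau(s_n))\cdots))\Rightarrow\delta$.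
   Context: Formulas: terms over a countably infinite set of variables in $\{\wedge,\vee,\cdot,\backslash,/,!,1,0\}$; $\mathcal L^0$-formulas are those without $!$. Structures: elements of the free unital groupoid $(Fm^\circ,\circ,\varepsilon)$ generated by formulas ($\circ$ non-associative, $\varepsilon$ empty structure and unit). $k$ ranges over structures in the free unital groupoid generated by formulas $!a$ (including $\varepsilon$). A context $u$ is a structure with exactly one hole; $u(x)$ fills it. A sequent is $x\Rightarrow\delta$, $\delta$ a formula or the empty stoup $\epsilon$. For a structure $x$, $\rho(x)$ is the formula obtained by replacing each $\circ$ by $\cdot$ ($\rho(\varepsilon)=1$); $\theta(\epsilon)=0$, $\theta(a)=a$; for $s=(x\Rightarrow\delta)$, $\tau(s)=!(\rho(x)\backslash\theta(\delta))$. $\mathbf{NACILL}^0$: initial sequents $a\Rightarrow a$, $\varepsilon\Rightarrow 1$, $0\Rightarrow\epsilon$; rules (premises / conclusion): (cut) $x\Rightarrow a$, $u(a)\Rightarrow\delta$ / $u(x)\Rightarrow\delta$; $(1\Rightarrow)$ $u(\varepsilon)\Rightarrow\delta$ / $u(1)\Rightarrow\delta$; $(\Rightarrow 0)$ $x\Rightarrow\epsilon$ / $x\Rightarrow 0$; $(\backslash\Rightarrow)$ $x\Rightarrow a$, $u(b)\Rightarrow\delta$ / $u(x\circ(a\backslash b))\Rightarrow\delta$; $(\Rightarrow\backslash)$ $a\circ x\Rightarrow b$ / $x\Rightarrow a\backslash b$; $(/\Rightarrow)$ $x\Rightarrow a$, $u(b)\Rightarrow\delta$ / $u((b/a)\circ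 x)\Rightarrow\delta$; $(\Rightarrow/)$ $x\circ a\Rightarrow b$ / $x\Rightarrow b/a$; $(\cdot\Rightarrow)$ $u(a\circ b)\Rightarrow\delta$ / $u(a\cdot b)\Rightarrow\delta$; $(\Rightarrow\cdot)$ $x\Rightarrow a$, $y\Rightarrow b$ / $x\circ y\Rightarrow a\cdot b$; $(\wedge\Rightarrow)$ $u(a_i)\Rightarrow\delta$ / $u(a_1\wedge a_2)\Rightarrow\delta$; $(\Rightarrow\wedge)$ $x\Rightarrow a$, $x\Rightarrow b$ / $x\Rightarrow a\wedge b$; $(\vee\Rightarrow)$ $u(a)\Rightarrow\delta$, $u(b)\Rightarrow\delta$ / $u(a\vee b)\Rightarrow\delta$; $(\Rightarrow\vee)$ $x\Rightarrow a_i$ / $x\Rightarrow a_1\vee a_2$; $(!\Rightarrow)$ $u(a)\Rightarrow\delta$ / $u(!a)\Rightarrow\delta$; $(\Rightarrow!)$ $k\Rightarrow a$ / $k\Rightarrow !a$; $(kw)$ $u(\varepsilon)\Rightarrow\delta$ / $u(k)\Rightarrow\delta$; $(kc)$ $u(k\circ k)\Rightarrow\delta$ / $u(k)\Rightarrow\delta$; two-directional: $(ke)$ $u(k\circ y)\Rightarrow\delta\leftrightarrow u(y\circ k)\Rightarrow\delta$; $(ka1)$ $u((k\circ y)\circ z)\Rightarrow\delta\leftrightarrow u(k\circ(y\circ z))\Rightarrow\delta$; $(ka2)$ $u((x\circ y)\circ k)\Rightarrow\delta\leftrightarrow u(x\circ(y\circ k))\Rightarrow\delta$. $\mathbf{NACCLL}^-$: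 $\mathbf{NACILL}^0$ plus initial sequents ${\sim}(-a)\Rightarrow a$, $-({\sim}a)\Rightarrow a$, $({\sim}a)/b\Rightarrow a\backslash(-b)$, $a\backslash(-b)\Rightarrow({\sim}a)/b$, where ${\sim}a:=a\backslash 0$, $-a:=0/a$. $\mathbf{NACCLL}$: additionally ${\sim}a\Rightarrow -a$, $-a\Rightarrow{\sim}a$. $\mathbf{InFNL}$ ($\mathbf{CyInFNL}$): the $!$-free fragment of $\mathbf{NACCLL}^-$ ($\mathbf{NACCLL}$), using only $!$-free formulas and omitting $(!\Rightarrow),(\Rightarrow!),(kw),(kc),(ke),(ka1),(ka2)$. Structural rules: $(e)$ $u(x\circ y)\Rightarrow\delta$ / $u(y\circ x)\Rightarrow\delta$; $(c)$ $u(x\circ x)\Rightarrow\delta$ / $u(x)\Rightarrow\delta$; $(i)$ $u(\varepsilon)\Rightarrow\delta$ / $u(x)\Rightarrow\delta$; $(o)$ $x\Rightarrow\epsilon$ / $x\Rightarrow a$; $(w)$ means both $(i)$ and $(o)$. Subscript $R$ adds the rules in $R$. $\mathcal S\vdash s$: there is a derivation of $s$ whose leaves are initial sequents or members of $\mathcal S$; $\vdash s$ means $\emptyset\vdash s$. *)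

theory Defs
  imports Main
begin

(* Ldiv a b  represents  a \ b ;  Rdiv b a  represents  b / a *)
datatype fm = Var nat | And fm fm | Or fm fm | Dot fm fm | Ldiv fm fm | Rdiv fm fm
  | Bang fm | One | Zero

fun bang_free :: "fm \<Rightarrow> bool" where
  "bang_free (Var n) = True"
| "bang_free (And a b) = (bang_free a \<and> bang_free b)"
| "bang_free (Or a b) = (bang_free a \<and> bang_free b)"
| "bang_free (Dot a b) = (bang_free a \<and> bang_free b)"
| "bang_free (Ldiv a b) = (bang_free a \<and> bang_free b)"
| "bang_free (Rdiv a b) = (bang_free a \<and> bang_free b)"
| "bang_free (Bang a) = False"
| "bang_free One = True"
| "bang_free Zero = True"

definition tneg :: "fm \<Rightarrow> fm" where "tneg a = Ldiv a Zero"
definition mneg :: "fm \<Rightarrow> fm" where "mneg a = Rdiv Zero a"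

(* Nonempty structures are binary trees of formulas; a structure is either the
   empty structure (None) or a nonempty one (Some t).  This is a canonical
   representation of the free unital groupoid: the unit laws are built in via comp. *)
datatype tree = Leaf fm | Node tree tree

type_synonym str = "tree option"

definition comp :: "str \<Rightarrow> str \<Rightarrow> str" where
  "comp x y = (case x of None \<Rightarrow> y
              | Some s \<Rightarrow> (case y of None \<Rightarrow> Some s | Some t \<Rightarrow> Some (Node s t)))"

definition fml :: "fm \<Rightarrow> str" where "fml a = Some (Leaf a)"

fun tree_bf :: "tree \<Rightarrow> bool" where
  "tree_bf (Leaf a) = bang_free a"
| "tree_bf (Node s t) = (tree_bf s \<and> tree_bf t)"

definition str_bf :: "str \<Rightarrow> bool" where
  "str_bf x = (case x of None \<Rightarrow> True | Some t \<Rightarrow> tree_bf t)"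

fun k_tree :: "tree \<Rightarrow> bool" where
  "k_tree (Leaf a) = (\<exists>b. a = Bang b)"
| "k_tree (Node s t) = (k_tree s \<and> k_tree t)"

definition is_k :: "str \<Rightarrow> bool" where
  "is_k x = (case x of None \<Rightarrow> True | Some t \<Rightarrow> k_tree t)"

(* a structure with exactly one hole; sides that are empty vanish by the unit laws *)
datatype ctx = Hole | CL ctx tree | CR tree ctx

fun fill :: "ctx \<Rightarrow> str \<Rightarrow> str" where
  "fill Hole x = x"
| "fill (CL u t) x = comp (fill u x) (Some t)"
| "fill (CR t u) x = comp (Some t) (fill u x)"

(* stoup: Some a is a formula, None is the empty stoup *)
type_synonym seq = "str \<times> fm option"

definition seq_bf :: "seq \<Rightarrow> bool" where
  "seq_bf s = (str_bf (fst s) \<and> (case snd s of None \<Rightarrow> True | Some a \<Rightarrow> bang_free a))"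

fun rho_t :: "tree \<Rightarrow> fm" where
  "rho_t (Leaf a) = a"
| "rho_t (Node s t) = Dot (rho_t s) (rho_t t)"

definition rho :: "str \<Rightarrow> fm" where
  "rho x = (case x of None \<Rightarrow> One | Some t \<Rightarrow> rho_t t)"

definition theta :: "fm option \<Rightarrow> fm" where
  "theta d = (case d of None \<Rightarrow> Zero | Some a \<Rightarrow> a)"

definition tau :: "seq \<Rightarrow> fm" where
  "tau s = Bang (Ldiv (rho (fst s)) (theta (snd s)))"

fun nest :: "seq list \<Rightarrow> tree" where
  "nest [] = Leaf One"
| "nest [s] = Leaf (tau s)"
| "nest (s # t # ts) = Node (Leaf (tau s)) (nest (t # ts))"

datatype srule = E | C | W   (* (e), (c), (w) = (i) and (o) *)

(* rule_inst bg cy R premises conclusion.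
   bg: the exponential ! and its rules (kw,kc,ke,ka1,ka2,!=>,=>!) are present;
   cy: the cyclic axioms ~a => -a, -a => ~a are present.
   The NACCLL^- axioms are always present. *)
inductive rule_inst :: "bool \<Rightarrow> bool \<Rightarrow> srule set \<Rightarrow> seq list \<Rightarrow> seq \<Rightarrow> bool"
  for bg :: bool and cy :: bool and R :: "srule set" where
  ax_id: "rule_inst bg cy R [] (fml a, Some a)"
| ax_one: "rule_inst bg cy R [] (None, Some One)"
| ax_zero: "rule_inst bg cy R [] (fml Zero, None)"
| ax_dn1: "rule_inst bg cy R [] (fml (tneg (mneg a)), Some a)"
| ax_dn2: "rule_inst bg cy R [] (fml (mneg (tneg a)), Some a)"
| ax_cd1: "rule_inst bg cy R [] (fml (Rdiv (tneg a) b), Some (Ldiv a (mneg b)))"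
| ax_cd2: "rule_inst bg cy R [] (fml (Ldiv a (mneg b)), Some (Rdiv (tneg a) b))"
| ax_cy1: "cy \<Longrightarrow> rule_inst bg cy R [] (fml (tneg a), Some (mneg a))"
| ax_cy2: "cy \<Longrightarrow> rule_inst bg cy R [] (fml (mneg a), Some (tneg a))"
| cut: "rule_inst bg cy R [(x, Some a), (fill u (fml a), d)] (fill u x, d)"
| one_l: "rule_inst bg cy R [(fill u None, d)] (fill u (fml One), d)"
| zero_r: "rule_inst bg cy R [(x, None)] (x, Some Zero)"
| ldiv_l: "rule_inst bg cy R [(x, Some a), (fill u (fml b), d)] (fill u (comp x (fml (Ldiv a b))), d)"
| ldiv_r: "rule_inst bg cy R [(comp (fml a) x, Some b)] (x, Some (Ldiv a b))"
| rdiv_l: "rule_inst bg cy R [(x, Some a), (fill u (fml b), d)] (fill u (comp (fml (Rdiv b a)) x), d)"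
| rdiv_r: "rule_inst bg cy R [(comp x (fml a), Some b)] (x, Some (Rdiv b a))"
| dot_l: "rule_inst bg cy R [(fill u (comp (fml a) (fml b)), d)] (fill u (fml (Dot a b)), d)"
| dot_r: "rule_inst bg cy R [(x, Some a), (y, Some b)] (comp x y, Some (Dot a b))"
| and_l1: "rule_inst bg cy R [(fill u (fml a), d)] (fill u (fml (And a b)), d)"
| and_l2: "rule_inst bg cy R [(fill u (fml b), d)] (fill u (fml (And a b)), d)"
| and_r: "rule_inst bg cy R [(x, Some a), (x, Some b)] (x, Some (And a b))"
| or_l: "rule_inst bg cy R [(fill u (fml a), d), (fill u (fml b), d)] (fill u (fml (Or a b)), d)"
| or_r1: "rule_inst bg cy R [(x, Some a)] (x, Some (Or a b))"
| or_r2: "rule_inst bg cy R [(x, Some b)] (x, Some (Or a b))"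
| bang_l: "bg \<Longrightarrow> rule_inst bg cy R [(fill u (fml a), d)] (fill u (fml (Bang a)), d)"
| bang_r: "bg \<Longrightarrow> is_k k \<Longrightarrow> rule_inst bg cy R [(k, Some a)] (k, Some (Bang a))"
| kw: "bg \<Longrightarrow> is_k k \<Longrightarrow> rule_inst bg cy R [(fill u None, d)] (fill u k, d)"
| kc: "bg \<Longrightarrow> is_k k \<Longrightarrow> rule_inst bg cy R [(fill u (comp k k), d)] (fill u k, d)"
| ke1: "bg \<Longrightarrow> is_k k \<Longrightarrow> rule_inst bg cy R [(fill u (comp k y), d)] (fill u (comp y k), d)"
| ke2: "bg \<Longrightarrow> is_k k \<Longrightarrow> rule_inst bg cy R [(fill u (comp y k), d)] (fill u (comp k y), d)"
| ka1a: "bg \<Longrightarrow> is_k k \<Longrightarrow>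
    rule_inst bg cy R [(fill u (comp (comp k y) z), d)] (fill u (comp k (comp y z)), d)"
| ka1b: "bg \<Longrightarrow> is_k k \<Longrightarrow>
    rule_inst bg cy R [(fill u (comp k (comp y z)), d)] (fill u (comp (comp k y) z), d)"
| ka2a: "bg \<Longrightarrow> is_k k \<Longrightarrow>
    rule_inst bg cy R [(fill u (comp (comp x y) k), d)] (fill u (comp x (comp y k)), d)"
| ka2b: "bg \<Longrightarrow> is_k k \<Longrightarrow>
    rule_inst bg cy R [(fill u (comp x (comp y k)), d)] (fill u (comp (comp x y) k), d)"
| exch: "E \<in> R \<Longrightarrow> rule_inst bg cy R [(fill u (comp x y), d)] (fill u (comp y x), d)"
| contr: "C \<in> R \<Longrightarrow> rule_inst bg cy R [(fill u (comp x x), d)] (fill u x, d)"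
| weak_i: "W \<in> R \<Longrightarrow> rule_inst bg cy R [(fill u None, d)] (fill u x, d)"
| weak_o: "W \<in> R \<Longrightarrow> rule_inst bg cy R [(x, None)] (x, Some a)"

(* When bg = False (the !-free fragments InFNL / CyInFNL),
   every sequent occurring in the derivation must be !-free. *)
inductive der :: "bool \<Rightarrow> bool \<Rightarrow> srule set \<Rightarrow> seq set \<Rightarrow> seq \<Rightarrow> bool"
  for bg :: bool and cy :: bool and R :: "srule set" and S :: "seq set" where
  hyp: "s \<in> S \<Longrightarrow> (bg \<or> seq_bf s) \<Longrightarrow> der bg cy R S s"
| rule: "rule_inst bg cy R ps s \<Longrightarrow> (\<forall>p\<in>set ps. der bg cy R S p) \<Longrightarrow> (bg \<or> seq_bf s)
         \<Longrightarrow> der bg cy R S s"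

definition InFNL :: "srule set \<Rightarrow> seq set \<Rightarrow> seq \<Rightarrow> bool" where
  "InFNL R S s = der False False R S s"
definition CyInFNL :: "srule set \<Rightarrow> seq set \<Rightarrow> seq \<Rightarrow> bool" where
  "CyInFNL R S s = der False True R S s"
definition NACCLLm :: "srule set \<Rightarrow> seq \<Rightarrow> bool" where
  "NACCLLm R s = der True False R {} s"
definition NACCLL :: "srule set \<Rightarrow> seq \<Rightarrow> bool" where
  "NACCLL R s = der True True R {} s"

end

theory Submission
  imports Defs
begin

declare fml_def[simp]

lemma comp_simps[simp]: "comp None y = y" "comp x None = x" "comp (Some s) (Some t) = Some (Node s t)"
  by (auto simp: comp_def split: option.splits)

lemma str_bf_simps[simp]: "str_bf None" "str_bf (Some t) = tree_bf t"
  by (auto simp: str_bf_def)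

lemma str_bf_comp[simp]: "str_bf (comp x y) = (str_bf x \<and> str_bf y)"
  by (auto simp: comp_def str_bf_def split: option.splits)

lemma seq_bf_simps[simp]: "seq_bf (x, None) = str_bf x" "seq_bf (x, Some a) = (str_bf x \<and> bang_free a)"
  by (auto simp: seq_bf_def)

lemma rs0: "rule_inst bg cy R [] s \<Longrightarrow> bg \<or> seq_bf s \<Longrightarrow> s = s' \<Longrightarrow> der bg cy R S s'"
  using der.rule by fastforce
lemma rs1: "rule_inst bg cy R [p] s \<Longrightarrow> der bg cy R S p \<Longrightarrow> bg \<or> seq_bf s \<Longrightarrow> s = s' \<Longrightarrow> der bg cy R S s'"
  using der.rule by fastforce
lemma rs2: "rule_inst bg cy R [p,q] s \<Longrightarrow> der bg cy R S p \<Longrightarrow> der bg cy R S q \<Longrightarrow> bg \<or> seq_bf s \<Longrightarrow> s = s' \<Longrightarrow> der bg cy R S s'"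
  using der.rule by fastforce

lemma der_bf: "der False cy R S s \<Longrightarrow> seq_bf s"
  by (cases rule: der.cases) auto

lemma cutH: "der bg cy R S (x, Some a) \<Longrightarrow> der bg cy R S (Some (Leaf a), d) \<Longrightarrow> bg \<or> seq_bf (x, d) \<Longrightarrow> der bg cy R S (x, d)"
  by (rule rs2[OF rule_inst.cut[where u=Hole and x=x and a=a and d=d]]) auto

lemma der_dot_r: "der bg cy R S (x, Some a) \<Longrightarrow> der bg cy R S (y, Some b) \<Longrightarrow> bg \<or> seq_bf (comp x y, Some (Dot a b)) \<Longrightarrow> der bg cy R S (comp x y, Some (Dot a b))"
  by (rule rs2[OF rule_inst.dot_r]) auto

lemma der_dot_lH: "der bg cy R S (Some (Node (Leaf a) (Leaf b)), d) \<Longrightarrow> bg \<or> seq_bf (Some (Leaf (Dot a b)), d) \<Longrightarrow> der bg cy R S (Some (Leaf (Dot a b)), d)"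
  by (rule rs1[OF rule_inst.dot_l[where u=Hole and a=a and b=b and d=d]]) auto

lemma der_one: "der bg cy R S (None, Some One)" by (rule rs0[OF rule_inst.ax_one]) auto
lemma der_zero: "der bg cy R S (Some (Leaf Zero), None)" by (rule rs0[OF rule_inst.ax_zero]) auto
lemma der_id: "bg \<or> bang_free a \<Longrightarrow> der bg cy R S (Some (Leaf a), Some a)" by (rule rs0[OF rule_inst.ax_id]) auto


locale L = fixes cy :: bool and R :: "srule set" and S :: "seq set"
begin

abbreviation D where "D a b \<equiv> der False cy R S (Some (Leaf a), Some b)"

lemma D_bf: "D a b \<Longrightarrow> bang_free a \<and> bang_free b"
  using der_bf[of cy R S "(Some (Leaf a), Some b)"] by simp

lemma D_id: "bang_free a \<Longrightarrow> D a a"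
  by (rule der_id) simp

lemma D_trans: "D a b \<Longrightarrow> D b c \<Longrightarrow> D a c"
  by (rule cutH) (auto dest: D_bf)

lemma D_dotl_iff: "D (Dot a b) c \<longleftrightarrow> der False cy R S (Some (Node (Leaf a) (Leaf b)), Some c)"
proof
  assume h: "D (Dot a b) c"
  have bf: "bang_free a" "bang_free b" using D_bf[OF h] by auto
  have "der False cy R S (comp (Some (Leaf a)) (Some (Leaf b)), Some (Dot a b))"
    by (rule der_dot_r) (use bf in \<open>auto intro: der_id\<close>)
  then have "der False cy R S (Some (Node (Leaf a) (Leaf b)), Some (Dot a b))" by simp
  then show "der False cy R S (Some (Node (Leaf a) (Leaf b)), Some c)"
    using h bf D_bf[OF h] by (rule_tac cutH) auto
next
  assume h: "der False cy R S (Some (Node (Leaf a) (Leaf b)), Some c)"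
  show "D (Dot a b) c" using der_bf[OF h] by (intro der_dot_lH[OF h]) simp
qed

lemma D_res_l: "D (Dot a b) c \<longleftrightarrow> D b (Ldiv a c)"
proof
  assume "D (Dot a b) c"
  then have h: "der False cy R S (Some (Node (Leaf a) (Leaf b)), Some c)" using D_dotl_iff by blast
  show "D b (Ldiv a c)"
    by (rule rs1[OF rule_inst.ldiv_r[where a=a and x="fml b" and b=c]]) (use h der_bf[OF h] in auto)
next
  assume h: "D b (Ldiv a c)"
  have bf: "bang_free a" "bang_free b" "bang_free c" using D_bf[OF h] by auto
  have h2: "der False cy R S (Some (Node (Leaf a) (Leaf (Ldiv a c))), Some c)"
    by (rule rs2[OF rule_inst.ldiv_l[where x="fml a" and a=a and b=c and u=Hole and d="Some c"]])
      (use bf in \<open>auto intro: der_id\<close>)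
  have "der False cy R S (Some (Node (Leaf a) (Leaf b)), Some c)"
    by (rule rs2[OF rule_inst.cut[where x="fml b" and a="Ldiv a c" and u="CR (Leaf a) Hole" and d="Some c"]])
     (use h h2 bf in auto)
  then show "D (Dot a b) c" using D_dotl_iff by blast
qed

lemma D_res_r: "D (Dot a b) c \<longleftrightarrow> D a (Rdiv c b)"
proof
  assume "D (Dot a b) c"
  then have h: "der False cy R S (Some (Node (Leaf a) (Leaf b)), Some c)" using D_dotl_iff by blast
  show "D a (Rdiv c b)"
    by (rule rs1[OF rule_inst.rdiv_r[where a=b and x="fml a" and b=c]]) (use h der_bf[OF h] in auto)
next
  assume h: "D a (Rdiv c b)"
  have bf: "bang_free a" "bang_free b" "bang_free c" using D_bf[OF h] by auto
  have h2: "der False cy R S (Some (Node (Leaf (Rdiv c b)) (Leaf b)), Some c)"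
    by (rule rs2[OF rule_inst.rdiv_l[where x="fml b" and a=b and b=c and u=Hole and d="Some c"]])
      (use bf in \<open>auto intro: der_id\<close>)
  have "der False cy R S (Some (Node (Leaf a) (Leaf b)), Some c)"
    by (rule rs2[OF rule_inst.cut[where x="fml a" and a="Rdiv c b" and u="CL Hole (Leaf b)" and d="Some c"]])
      (use h h2 bf in auto)
  then show "D (Dot a b) c" using D_dotl_iff by blast
qed

lemma D_and1: "bang_free a \<Longrightarrow> bang_free b \<Longrightarrow> D (And a b) a"
  by (rule rs1[OF rule_inst.and_l1[where u=Hole and a=a and b=b and d="Some a"]]) (auto intro: der_id)
lemma D_and2: "bang_free a \<Longrightarrow> bang_free b \<Longrightarrow> D (And a b) b"
  by (rule rs1[OF rule_inst.and_l2[where u=Hole and a=a and b=b and d="Some b"]]) (auto intro: der_id)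
lemma D_andr: "D c a \<Longrightarrow> D c b \<Longrightarrow> D c (And a b)"
  by (rule rs2[OF rule_inst.and_r]) (auto dest: D_bf)
lemma D_or1: "bang_free a \<Longrightarrow> bang_free b \<Longrightarrow> D a (Or a b)"
  by (rule rs1[OF rule_inst.or_r1]) (auto intro: der_id)
lemma D_or2: "bang_free a \<Longrightarrow> bang_free b \<Longrightarrow> D b (Or a b)"
  by (rule rs1[OF rule_inst.or_r2]) (auto intro: der_id)
lemma D_orl: "D a c \<Longrightarrow> D b c \<Longrightarrow> D (Or a b) c"
  by (rule rs2[OF rule_inst.or_l[where u=Hole and a=a and b=b and d="Some c"]]) (auto dest: D_bf)

lemma D_unitl1: "bang_free a \<Longrightarrow> D (Dot One a) a"
  unfolding D_dotl_iff
  by (rule rs1[OF rule_inst.one_l[where u="CL Hole (Leaf a)" and d="Some a"]]) (auto intro: der_id)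
lemma D_unitl2: "bang_free a \<Longrightarrow> D a (Dot One a)"
  using der_dot_r[OF der_one der_id[of False a cy R S]] by simp
lemma D_unitr1: "bang_free a \<Longrightarrow> D (Dot a One) a"
  unfolding D_dotl_iff
  by (rule rs1[OF rule_inst.one_l[where u="CR (Leaf a) Hole" and d="Some a"]]) (auto intro: der_id)
lemma D_unitr2: "bang_free a \<Longrightarrow> D a (Dot a One)"
  using der_dot_r[OF der_id der_one, of False a cy R S] by simp

lemma D_dn1: "bang_free a \<Longrightarrow> D (tneg (mneg a)) a"
  by (rule rs0[OF rule_inst.ax_dn1]) (auto simp add: tneg_def mneg_def)
lemma D_dn2: "bang_free a \<Longrightarrow> D (mneg (tneg a)) a"
  by (rule rs0[OF rule_inst.ax_dn2]) (auto simp add: tneg_def mneg_def)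
lemma D_cd1: "bang_free a \<Longrightarrow> bang_free b \<Longrightarrow> D (Rdiv (tneg a) b) (Ldiv a (mneg b))"
  by (rule rs0[OF rule_inst.ax_cd1]) (auto simp add: tneg_def mneg_def)
lemma D_cd2: "bang_free a \<Longrightarrow> bang_free b \<Longrightarrow> D (Ldiv a (mneg b)) (Rdiv (tneg a) b)"
  by (rule rs0[OF rule_inst.ax_cd2]) (auto simp add: tneg_def mneg_def)
lemma D_cy1: "cy \<Longrightarrow> bang_free a \<Longrightarrow> D (tneg a) (mneg a)"
  by (rule rs0[OF rule_inst.ax_cy1]) (auto simp add: tneg_def mneg_def)
lemma D_cy2: "cy \<Longrightarrow> bang_free a \<Longrightarrow> D (mneg a) (tneg a)"
  by (rule rs0[OF rule_inst.ax_cy2]) (auto simp add: tneg_def mneg_def)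

lemma D_exch: "E \<in> R \<Longrightarrow> bang_free a \<Longrightarrow> bang_free b \<Longrightarrow> D (Dot a b) (Dot b a)"
  unfolding D_dotl_iff
  by (rule rs1[OF rule_inst.exch[where u=Hole and x="fml b" and y="fml a" and d="Some (Dot b a)"]])
    (auto intro: der_dot_r[where x="fml b" and y="fml a", simplified] der_id)
lemma D_contr: "C \<in> R \<Longrightarrow> bang_free a \<Longrightarrow> D a (Dot a a)"
  by (rule rs1[OF rule_inst.contr[where u=Hole and x="fml a" and d="Some (Dot a a)"]])
    (auto intro: der_dot_r[where x="fml a" and y="fml a", simplified] der_id)
lemma D_wone: "W \<in> R \<Longrightarrow> bang_free a \<Longrightarrow> D a One"
  by (rule rs1[OF rule_inst.weak_i[where u=Hole and x="fml a" and d="Some One"]]) (auto intro: der_one)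
lemma D_wzero: "W \<in> R \<Longrightarrow> bang_free a \<Longrightarrow> D Zero a"
  by (rule rs1[OF rule_inst.weak_o[where x="fml Zero" and a=a]]) (auto intro: der_zero)

end

fun st :: "fm \<Rightarrow> fm" where
  "st (Var n) = Var n"
| "st (And a b) = And (st a) (st b)"
| "st (Or a b) = Or (st a) (st b)"
| "st (Dot a b) = Dot (st a) (st b)"
| "st (Ldiv a b) = Ldiv (st a) (st b)"
| "st (Rdiv a b) = Rdiv (st a) (st b)"
| "st (Bang a) = st a"
| "st One = One"
| "st Zero = Zero"

lemma st_bf[simp]: "bang_free (st a)" by (induction a) auto
lemma st_id: "bang_free a \<Longrightarrow> st a = a" by (induction a) auto

datatype ext = Bot | Top | M fm

fun mul where
  "mul Bot y = Bot" | "mul x Bot = Bot" | "mul Top y = Top" | "mul x Top = Top" | "mul (M a) (M b) = M (Dot a b)"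
fun ldv where
  "ldv Bot z = Top" | "ldv x Top = Top" | "ldv Top z = Bot" | "ldv (M a) Bot = Bot" | "ldv (M a) (M b) = M (Ldiv a b)"
fun rdv where
  "rdv z Bot = Top" | "rdv Top y = Top" | "rdv z Top = Bot" | "rdv Bot (M a) = Bot" | "rdv (M b) (M a) = M (Rdiv b a)"
fun mt where
  "mt Bot y = Bot" | "mt x Bot = Bot" | "mt Top y = y" | "mt x Top = x" | "mt (M a) (M b) = M (And a b)"
fun jn where
  "jn Top y = Top" | "jn x Top = Top" | "jn Bot y = y" | "jn x Bot = x" | "jn (M a) (M b) = M (Or a b)"

lemma mul_Bot2[simp]: "mul x Bot = Bot" by (cases x) auto

context L begin

definition Q where "Q a b = D (st a) (st b)"

lemma Q_refl[simp]: "Q a a" unfolding Q_def by (rule D_id) simp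
lemma Q_trans: "Q a b \<Longrightarrow> Q b c \<Longrightarrow> Q a c" unfolding Q_def by (rule D_trans)
lemma Q_res_l: "Q (Dot a b) c \<longleftrightarrow> Q b (Ldiv a c)" unfolding Q_def using D_res_l by simp
lemma Q_res_r: "Q (Dot a b) c \<longleftrightarrow> Q a (Rdiv c b)" unfolding Q_def using D_res_r by simp
lemma Q_and1: "Q (And a b) a" unfolding Q_def by (simp add: D_and1)
lemma Q_and2: "Q (And a b) b" unfolding Q_def by (simp add: D_and2)
lemma Q_andr: "Q c a \<Longrightarrow> Q c b \<Longrightarrow> Q c (And a b)" unfolding Q_def by (simp add: D_andr)
lemma Q_or1: "Q a (Or a b)" unfolding Q_def by (simp add: D_or1)
lemma Q_or2: "Q b (Or a b)" unfolding Q_def by (simp add: D_or2)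
lemma Q_orl: "Q a c \<Longrightarrow> Q b c \<Longrightarrow> Q (Or a b) c" unfolding Q_def by (simp add: D_orl)
lemma Q_unitl1: "Q (Dot One a) a" unfolding Q_def by (simp add: D_unitl1)
lemma Q_unitl2: "Q a (Dot One a)" unfolding Q_def by (simp add: D_unitl2)
lemma Q_unitr1: "Q (Dot a One) a" unfolding Q_def by (simp add: D_unitr1)
lemma Q_unitr2: "Q a (Dot a One)" unfolding Q_def by (simp add: D_unitr2)
lemma Q_dn1: "Q (tneg (mneg a)) a" unfolding Q_def using D_dn1[of "st a"] by (simp add: tneg_def mneg_def)
lemma Q_dn2: "Q (mneg (tneg a)) a" unfolding Q_def using D_dn2[of "st a"] by (simp add: tneg_def mneg_def)
lemma Q_cd1: "Q (Rdiv (tneg a) b) (Ldiv a (mneg b))" unfolding Q_def using D_cd1[of "st a" "st b"] by (simp add: tneg_def mneg_def)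
lemma Q_cd2: "Q (Ldiv a (mneg b)) (Rdiv (tneg a) b)" unfolding Q_def using D_cd2[of "st a" "st b"] by (simp add: tneg_def mneg_def)
lemma Q_cy1: "cy \<Longrightarrow> Q (tneg a) (mneg a)" unfolding Q_def using D_cy1[of "st a"] by (simp add: tneg_def mneg_def)
lemma Q_cy2: "cy \<Longrightarrow> Q (mneg a) (tneg a)" unfolding Q_def using D_cy2[of "st a"] by (simp add: tneg_def mneg_def)
lemma Q_exch: "E \<in> R \<Longrightarrow> Q (Dot a b) (Dot b a)" unfolding Q_def by (simp add: D_exch)
lemma Q_contr: "C \<in> R \<Longrightarrow> Q a (Dot a a)" unfolding Q_def by (simp add: D_contr)
lemma Q_wone: "W \<in> R \<Longrightarrow> Q a One" unfolding Q_def by (simp add: D_wone)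
lemma Q_wzero: "W \<in> R \<Longrightarrow> Q Zero a" unfolding Q_def by (simp add: D_wzero)

fun le where
  "le Bot y = True" | "le x Top = True" | "le Top y = False" | "le x Bot = False" | "le (M a) (M b) = Q a b"

lemma le_refl[simp]: "le x x" by (cases x) auto
lemma le_Top[simp]: "le x Top" by (cases x) auto
lemma le_Bot[simp]: "le x Bot \<longleftrightarrow> x = Bot" by (cases x) auto
lemma le_trans: "le x y \<Longrightarrow> le y z \<Longrightarrow> le x z"
  by (cases x; cases y; cases z) (auto intro: Q_trans)

lemma res_l: "le (mul x y) z \<longleftrightarrow> le y (ldv x z)"
  by (cases x; cases y; cases z) (auto simp: Q_res_l)
lemma res_r: "le (mul x y) z \<longleftrightarrow> le x (rdv z y)"
  by (cases x; cases y; cases z) (auto simp: Q_res_r)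

lemma mul_mono: "le x x' \<Longrightarrow> le y y' \<Longrightarrow> le (mul x y) (mul x' y')"
proof -
  assume a: "le x x'" "le y y'"
  have "le y' (ldv x' (mul x' y'))" using res_l[of x' y' "mul x' y'"] by simp
  then have "le y (ldv x' (mul x' y'))" using a le_trans by blast
  then have "le x' (rdv (mul x' y') y)" using res_l res_r by blast
  then have "le x (rdv (mul x' y') y)" using a le_trans by blast
  then show ?thesis using res_r by blast
qed

lemma unit_l1: "le (mul (M One) y) y" by (cases y) (auto simp: Q_unitl1)
lemma unit_l2: "le y (mul (M One) y)" by (cases y) (auto simp: Q_unitl2)
lemma unit_r1: "le (mul y (M One)) y" by (cases y) (auto simp: Q_unitr1)
lemma unit_r2: "le y (mul y (M One))" by (cases y) (auto simp: Q_unitr2)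

lemma mt1: "le (mt x y) x" by (cases x; cases y) (auto simp: Q_and1)
lemma mt2: "le (mt x y) y" by (cases x; cases y) (auto simp: Q_and2)
lemma mtr: "le z x \<Longrightarrow> le z y \<Longrightarrow> le z (mt x y)" by (cases x; cases y; cases z) (auto simp: Q_andr)
lemma jn1: "le x (jn x y)" by (cases x; cases y) (auto simp: Q_or1)
lemma jn2: "le y (jn x y)" by (cases x; cases y) (auto simp: Q_or2)
lemma jnl: "le x z \<Longrightarrow> le y z \<Longrightarrow> le (jn x y) z" by (cases x; cases y; cases z) (auto simp: Q_orl)

abbreviation "tn x \<equiv> ldv x (M Zero)"
abbreviation "mn x \<equiv> rdv (M Zero) x"

lemma e_dn1: "le (tn (mn x)) x" by (cases x) (auto simp: Q_dn1[unfolded tneg_def mneg_def])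
lemma e_dn2: "le (mn (tn x)) x" by (cases x) (auto simp: Q_dn2[unfolded tneg_def mneg_def])
lemma e_cd1: "le (rdv (tn x) y) (ldv x (mn y))"
  by (cases x; cases y) (auto simp: Q_cd1[unfolded tneg_def mneg_def])
lemma e_cd2: "le (ldv x (mn y)) (rdv (tn x) y)"
  by (cases x; cases y) (auto simp: Q_cd2[unfolded tneg_def mneg_def])
lemma e_cy1: assumes "cy" shows "le (tn x) (mn x)" by (cases x) (auto simp: Q_cy1[OF assms, unfolded tneg_def mneg_def])
lemma e_cy2: assumes "cy" shows "le (mn x) (tn x)" by (cases x) (auto simp: Q_cy2[OF assms, unfolded tneg_def mneg_def])
lemma e_exch: "E \<in> R \<Longrightarrow> le (mul x y) (mul y x)" by (cases x; cases y) (auto simp: Q_exch)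
lemma e_contr: "C \<in> R \<Longrightarrow> le x (mul x x)" by (cases x) (auto simp: Q_contr)

end

context L begin

fun val where
  "val (Var n) = M (Var n)"
| "val (And a b) = mt (val a) (val b)"
| "val (Or a b) = jn (val a) (val b)"
| "val (Dot a b) = mul (val a) (val b)"
| "val (Ldiv a b) = ldv (val a) (val b)"
| "val (Rdiv b a) = rdv (val b) (val a)"
| "val (Bang a) = (if le (M One) (val a) then M One else if W \<in> R then M Zero else Bot)"
| "val One = M One"
| "val Zero = M Zero"

fun valT where
  "valT (Leaf a) = val a"
| "valT (Node s t) = mul (valT s) (valT t)"

definition valS where "valS x = (case x of None \<Rightarrow> M One | Some t \<Rightarrow> valT t)"
definition valD where "valD d = (case d of None \<Rightarrow> M Zero | Some a \<Rightarrow> val a)"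

lemma valS_simps[simp]: "valS None = M One" "valS (Some t) = valT t"
  by (auto simp: valS_def)
lemma valD_simps[simp]: "valD None = M Zero" "valD (Some a) = val a"
  by (auto simp: valD_def)

lemma comp1: "le (valS (comp x y)) (mul (valS x) (valS y))"
  by (cases x; cases y) (auto simp: unit_l2 unit_r2 Q_unitl2)
lemma comp2: "le (mul (valS x) (valS y)) (valS (comp x y))"
  by (cases x; cases y) (auto simp: unit_l1 unit_r1 Q_unitl1)

lemma comp_le_iff: "le (valS (comp x y)) d \<longleftrightarrow> le (mul (valS x) (valS y)) d"
  using comp1 comp2 le_trans by blast

lemma ctx_res: "\<exists>g. \<forall>X. le (valS (fill u X)) d \<longleftrightarrow> le (valS X) g"
proof (induction u arbitrary: d)
  case Hole then show ?case by auto
next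
  case (CL u t)
  obtain g where g: "\<forall>X. le (valS (fill u X)) (rdv d (valT t)) \<longleftrightarrow> le (valS X) g"
    using CL by blast
  show ?case
    by (rule exI[of _ g]) (auto simp: comp_le_iff res_r[symmetric] g[rule_format, symmetric])
next
  case (CR t u)
  obtain g where g: "\<forall>X. le (valS (fill u X)) (ldv (valT t) d) \<longleftrightarrow> le (valS X) g"
    using CR by blast
  show ?case
    by (rule exI[of _ g]) (auto simp: comp_le_iff res_l[symmetric] g[rule_format, symmetric])
qed

lemma ctx_mono: "le (valS X) (valS Y) \<Longrightarrow> le (valS (fill u Y)) d \<Longrightarrow> le (valS (fill u X)) d"
  using ctx_res[of u d] le_trans by blast

lemma ctx_join: "le (valS (fill u (fml a))) d \<Longrightarrow> le (valS (fill u (fml b))) d \<Longrightarrow> le (valS (fill u (fml (Or a b)))) d"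
  using ctx_res[of u d] jnl by fastforce

lemma val_W: "W \<in> R \<Longrightarrow> \<exists>c. val a = M c"
  by (induction a) auto
lemma valT_W: "W \<in> R \<Longrightarrow> \<exists>c. valT t = M c"
  by (induction t) (auto dest: val_W[of a for a])
lemma valS_W: "W \<in> R \<Longrightarrow> \<exists>c. valS x = M c"
  by (cases x) (auto dest: valT_W)

lemma le_M_W: "W \<in> R \<Longrightarrow> le (M Zero) (M c)" by (simp add: Q_wzero)

lemma zl1: "W \<in> R \<Longrightarrow> Q c Zero \<Longrightarrow> Q (Dot b c) Zero"
proof -
  assume w: "W \<in> R" and h: "Q c Zero"
  have "le (mul (M b) (M c)) (mul (M b) (M Zero))" by (rule mul_mono) (use h in auto)
  moreover have "le (mul (M b) (M Zero)) (M Zero)" using res_l[of "M b" "M Zero" "M Zero"] w by (simp add: Q_wzero)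
  ultimately show ?thesis using le_trans by fastforce
qed
lemma zl2: "W \<in> R \<Longrightarrow> Q c Zero \<Longrightarrow> Q (Dot c b) Zero"
proof -
  assume w: "W \<in> R" and h: "Q c Zero"
  have "le (mul (M c) (M b)) (mul (M Zero) (M b))" by (rule mul_mono) (use h in auto)
  moreover have "le (mul (M Zero) (M b)) (M Zero)" using res_r[of "M Zero" "M b" "M Zero"] w by (simp add: Q_wzero)
  ultimately show ?thesis using le_trans by fastforce
qed
lemma zz: "W \<in> R \<Longrightarrow> Q a Zero \<Longrightarrow> Q a b"
  using Q_trans Q_wzero by blast

lemma zany: assumes "W \<in> R" "Q c Zero"
  shows "Q (Dot b c) X" "Q (Dot c b) X" "Q (Dot (Dot c b) e) X" "Q (Dot c (Dot b e)) X"
    "Q (Dot (Dot b e) c) X" "Q (Dot b (Dot e c)) X"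
  using assms by (meson zz zl1 zl2)+

definition kval where "kval z \<longleftrightarrow> (le z (M One) \<and> le (M One) z) \<or> z = Bot \<or> (W \<in> R \<and> le z (M Zero))"

lemma kvalE:
  assumes "kval k"
  obtains "le k (M One)" "le (M One) k" | "k = Bot" | c where "W \<in> R" "k = M c" "Q c Zero"
  using assms unfolding kval_def by (cases k) auto

lemma one_eqv:
  assumes "le k (M One)" "le (M One) k"
  shows "le (mul y k) y" "le y (mul y k)" "le (mul k y) y" "le y (mul k y)"
proof -
  show "le (mul y k) y" using mul_mono[OF le_refl assms(1)] unit_r1 le_trans by blast
  show "le y (mul y k)" using mul_mono[OF le_refl assms(2)] unit_r2 le_trans by blast
  show "le (mul k y) y" using mul_mono[OF assms(1) le_refl] unit_l1 le_trans by blast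
  show "le y (mul k y)" using mul_mono[OF assms(2) le_refl] unit_l2 le_trans by blast
qed

lemma K1: "kval k \<Longrightarrow> le k (M One)"
  by (erule kvalE) (auto simp: zz[of _ One])
lemma K2: "kval k \<Longrightarrow> le k (mul k k)"
  by (erule kvalE) (auto simp: one_eqv zz[of _ "Dot _ _"])
lemma K3: "kval k \<Longrightarrow> le (mul y k) (mul k y) \<and> le (mul k y) (mul y k)"
proof (erule kvalE)
  assume a: "le k (M One)" "le (M One) k"
  show ?thesis using le_trans[OF one_eqv(1)[OF a] one_eqv(4)[OF a]] le_trans[OF one_eqv(3)[OF a] one_eqv(2)[OF a]] by blast
next
  fix c assume "W \<in> R" "k = M c" "Q c Zero"
  then show ?thesis by (cases y) (auto simp: zany)
qed simp
lemma K4: "kval k \<Longrightarrow> le (mul (mul k y) z) (mul k (mul y z)) \<and> le (mul k (mul y z)) (mul (mul k y) z)"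
proof (erule kvalE)
  assume a: "le k (M One)" "le (M One) k"
  have "le (mul (mul k y) z) (mul y z)" using mul_mono[OF one_eqv(3)[OF a] le_refl] .
  moreover have "le (mul y z) (mul (mul k y) z)" using mul_mono[OF one_eqv(4)[OF a] le_refl] .
  ultimately show ?thesis using le_trans[OF _ one_eqv(4)[OF a]] le_trans[OF one_eqv(3)[OF a]] by blast
next
  fix c assume "W \<in> R" "k = M c" "Q c Zero"
  then show ?thesis by (cases y; cases z) (auto simp: zany)
qed simp
lemma K4': "kval k \<Longrightarrow> le (mul (mul x y) k) (mul x (mul y k)) \<and> le (mul x (mul y k)) (mul (mul x y) k)"
proof (erule kvalE)
  assume a: "le k (M One)" "le (M One) k"
  have "le (mul x (mul y k)) (mul x y)" using mul_mono[OF le_refl one_eqv(1)[OF a]] .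
  moreover have "le (mul x y) (mul x (mul y k))" using mul_mono[OF le_refl one_eqv(2)[OF a]] .
  ultimately show ?thesis using le_trans[OF _ one_eqv(2)[OF a]] le_trans[OF one_eqv(1)[OF a]] by blast
next
  fix c assume "W \<in> R" "k = M c" "Q c Zero"
  then show ?thesis by (cases x; cases y) (auto simp: zany)
qed simp
lemma K5: "kval a \<Longrightarrow> kval b \<Longrightarrow> kval (mul a b)"
proof (erule kvalE)
  assume a: "le a (M One)" "le (M One) a" and b: "kval b"
  show ?thesis using b
  proof (rule kvalE)
    assume b: "le b (M One)" "le (M One) b"
    have "le (mul a b) (M One)" using le_trans[OF one_eqv(3)[OF a] b(1)] .
    moreover have "le (M One) (mul a b)" using le_trans[OF b(2) one_eqv(4)[OF a]] .
    ultimately show ?thesis unfolding kval_def by blast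
  next
    fix c assume "W \<in> R" "b = M c" "Q c Zero"
    then show ?thesis using a unfolding kval_def by (cases a) (auto simp: zany)
  qed (simp add: kval_def)
next
  fix c assume a: "W \<in> R" "a = M c" "Q c Zero" and b: "kval b"
  show ?thesis using b
  proof (rule kvalE)
    assume b: "le b (M One)" "le (M One) b"
    then show ?thesis using a unfolding kval_def by (cases b) (auto simp: zany)
  next
    fix e assume "W \<in> R" "b = M e" "Q e Zero"
    then show ?thesis using a unfolding kval_def by (auto simp: zany)
  qed (simp add: kval_def)
qed (simp add: kval_def)

lemma K6: "kval k \<Longrightarrow> le k (val a) \<Longrightarrow> le k (val (Bang a))"
proof (erule kvalE)
  assume a: "le k (M One)" "le (M One) k" "le k (val a)"
  then have "le (M One) (val a)" using le_trans by blast
  then show ?thesis using a by simp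
next
  fix c assume "W \<in> R" "k = M c" "Q c Zero"
  then show ?thesis by (auto simp: zz[of _ One] zz[of _ Zero])
qed simp

lemma K7: "kval (val (Bang a))"
  by (auto simp: kval_def)

lemma kval_is_k: "is_k k \<Longrightarrow> kval (valS k)"
proof -
  have "k_tree t \<Longrightarrow> kval (valT t)" for t
  proof (induction t)
    case (Leaf a)
    then obtain b where "a = Bang b" by auto
    then show ?case using K7[of b] by (simp only: valT.simps)
  next
    case (Node s t) then show ?case by (auto intro: K5)
  qed
  then show "is_k k \<Longrightarrow> kval (valS k)" by (cases k) (auto simp: is_k_def kval_def)
qed

lemma bang_le: "le (val (Bang a)) (val a)"
  using val_W[of a] by (auto simp: Q_wzero)

end

context L begin

lemma nr1: "le (valS (comp x (comp y z))) (mul (valS x) (mul (valS y) (valS z)))"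
  using le_trans[OF comp1 mul_mono[OF le_refl comp1]] .
lemma nr2: "le (mul (valS x) (mul (valS y) (valS z))) (valS (comp x (comp y z)))"
  using le_trans[OF mul_mono[OF le_refl comp2] comp2] .
lemma nl1: "le (valS (comp (comp x y) z)) (mul (mul (valS x) (valS y)) (valS z))"
  using le_trans[OF comp1 mul_mono[OF comp1 le_refl]] .
lemma nl2: "le (mul (mul (valS x) (valS y)) (valS z)) (valS (comp (comp x y) z))"
  using le_trans[OF mul_mono[OF comp2 le_refl] comp2] .

lemma sound: "der True cy R {} s \<Longrightarrow> le (valS (fst s)) (valD (snd s))"
proof (induction rule: der.induct)
  case (hyp s) then show ?case by simp
next
  case (rule ps s)
  have IH: "\<forall>p\<in>set ps. le (valS (fst p)) (valD (snd p))" using rule by fastforce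
  from rule(1) IH show ?case
  proof cases
    case (ax_id a) then show ?thesis by simp
  next
    case ax_one then show ?thesis by simp
  next
    case ax_zero then show ?thesis by simp
  next
    case (ax_dn1 a) then show ?thesis using e_dn1 by (simp add: tneg_def mneg_def)
  next
    case (ax_dn2 a) then show ?thesis using e_dn2 by (simp add: tneg_def mneg_def)
  next
    case (ax_cd1 a b) then show ?thesis using e_cd1 by (simp add: tneg_def mneg_def)
  next
    case (ax_cd2 a b) then show ?thesis using e_cd2 by (simp add: tneg_def mneg_def)
  next
    case (ax_cy1 a)
    have "le (val (tneg a)) (val (mneg a))" using e_cy1[OF \<open>cy\<close>] by (simp add: tneg_def mneg_def)
    then show ?thesis using \<open>s = (fml (tneg a), Some (mneg a))\<close> by simp
  next
    case (ax_cy2 a)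
    have "le (val (mneg a)) (val (tneg a))" using e_cy2[OF \<open>cy\<close>] by (simp add: tneg_def mneg_def)
    then show ?thesis using \<open>s = (fml (mneg a), Some (tneg a))\<close> by simp
  next
    case (cut x a u d)
    then show ?thesis using IH ctx_mono[of x "fml a" u "valD d"] by simp
  next
    case (one_l u d)
    then show ?thesis using IH ctx_mono[of "fml One" None u "valD d"] by simp
  next
    case (zero_r x) then show ?thesis using IH by simp
  next
    case (ldiv_l x a u b d)
    have h1: "le (valS x) (val a)" "le (valS (fill u (fml b))) (valD d)" using ldiv_l IH by auto
    have "le (valS (comp x (fml (Ldiv a b)))) (mul (valS x) (ldv (val a) (val b)))"
      using comp1[of x "fml (Ldiv a b)"] by simp
    moreover have "le (mul (valS x) (ldv (val a) (val b))) (mul (val a) (ldv (val a) (val b)))"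
      by (rule mul_mono[OF h1(1) le_refl])
    moreover have "le (mul (val a) (ldv (val a) (val b))) (val b)" by (simp add: res_l)
    ultimately have "le (valS (comp x (fml (Ldiv a b)))) (val b)" using le_trans by blast
    then have "le (valS (fill u (comp x (fml (Ldiv a b))))) (valD d)"
      using h1(2) ctx_mono[of "comp x (fml (Ldiv a b))" "fml b" u "valD d"] by simp
    then show ?thesis using ldiv_l by simp
  next
    case (ldiv_r a x b)
    then show ?thesis using IH by (simp add: comp_le_iff res_l)
  next
    case (rdiv_l x a u b d)
    have h1: "le (valS x) (val a)" "le (valS (fill u (fml b))) (valD d)" using rdiv_l IH by auto
    have "le (valS (comp (fml (Rdiv b a)) x)) (mul (rdv (val b) (val a)) (valS x))"
      using comp1[of "fml (Rdiv b a)" x] by simp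
    moreover have "le (mul (rdv (val b) (val a)) (valS x)) (mul (rdv (val b) (val a)) (val a))"
      by (rule mul_mono[OF le_refl h1(1)])
    moreover have "le (mul (rdv (val b) (val a)) (val a)) (val b)" by (simp add: res_r)
    ultimately have "le (valS (comp (fml (Rdiv b a)) x)) (val b)" using le_trans by blast
    then have "le (valS (fill u (comp (fml (Rdiv b a)) x))) (valD d)"
      using h1(2) ctx_mono[of "comp (fml (Rdiv b a)) x" "fml b" u "valD d"] by simp
    then show ?thesis using rdiv_l by simp
  next
    case (rdiv_r x a b)
    then show ?thesis using IH by (simp add: comp_le_iff res_r)
  next
    case (dot_l u a b d)
    then show ?thesis using IH ctx_mono[of "fml (Dot a b)" "comp (fml a) (fml b)" u "valD d"] by simp
  next
    case (dot_r x a y b)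
    then have "le (valS x) (val a)" "le (valS y) (val b)" using IH by auto
    then show ?thesis using dot_r le_trans[OF comp1 mul_mono] by simp
  next
    case (and_l1 u a d b)
    then show ?thesis using IH ctx_mono[of "fml (And a b)" "fml a" u "valD d"] mt1 by simp
  next
    case (and_l2 u b d a)
    then show ?thesis using IH ctx_mono[of "fml (And a b)" "fml b" u "valD d"] mt2 by simp
  next
    case (and_r x a b)
    then show ?thesis using IH mtr by simp
  next
    case (or_l u a d b)
    then show ?thesis using IH ctx_join[of u a "valD d" b] by simp
  next
    case (or_r1 x a b)
    then show ?thesis using IH le_trans[OF _ jn1] by simp
  next
    case (or_r2 x b a)
    then show ?thesis using IH le_trans[OF _ jn2] by simp
  next
    case (bang_l u a d)
    then show ?thesis using IH ctx_mono[of "fml (Bang a)" "fml a" u "valD d"] bang_le by simp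
  next
    case (bang_r k a)
    then show ?thesis using IH K6[OF kval_is_k] by simp
  next
    case (kw k u d)
    then show ?thesis using IH ctx_mono[of k None u "valD d"] K1[OF kval_is_k] by simp
  next
    case (kc k u d)
    then have "le (valS k) (valS (comp k k))" using le_trans[OF K2[OF kval_is_k] comp2] by blast
    then show ?thesis using kc IH ctx_mono[of k "comp k k" u "valD d"] by simp
  next
    case (ke1 k u y d)
    then have "le (valS (comp y k)) (valS (comp k y))"
      using le_trans[OF comp1 le_trans[OF conjunct1[OF K3[OF kval_is_k]] comp2]] by blast
    then show ?thesis using ke1 IH ctx_mono[of "comp y k" "comp k y" u "valD d"] by simp
  next
    case (ke2 k u y d)
    then have "le (valS (comp k y)) (valS (comp y k))"
      using le_trans[OF comp1 le_trans[OF conjunct2[OF K3[OF kval_is_k]] comp2]] by blast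
    then show ?thesis using ke2 IH ctx_mono[of "comp k y" "comp y k" u "valD d"] by simp
  next
    case (ka1a k u y z d)
    then have "le (valS (comp k (comp y z))) (valS (comp (comp k y) z))"
      using le_trans[OF nr1 le_trans[OF conjunct2[OF K4[OF kval_is_k]] nl2]] by blast
    then show ?thesis using ka1a IH ctx_mono[of "comp k (comp y z)" "comp (comp k y) z" u "valD d"] by simp
  next
    case (ka1b k u y z d)
    then have "le (valS (comp (comp k y) z)) (valS (comp k (comp y z)))"
      using le_trans[OF nl1 le_trans[OF conjunct1[OF K4[OF kval_is_k]] nr2]] by blast
    then show ?thesis using ka1b IH ctx_mono[of "comp (comp k y) z" "comp k (comp y z)" u "valD d"] by simp
  next
    case (ka2a k u x y d)
    then have "le (valS (comp x (comp y k))) (valS (comp (comp x y) k))"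
      using le_trans[OF nr1 le_trans[OF conjunct2[OF K4'[OF kval_is_k]] nl2]] by blast
    then show ?thesis using ka2a IH ctx_mono[of "comp x (comp y k)" "comp (comp x y) k" u "valD d"] by simp
  next
    case (ka2b k u x y d)
    then have "le (valS (comp (comp x y) k)) (valS (comp x (comp y k)))"
      using le_trans[OF nl1 le_trans[OF conjunct1[OF K4'[OF kval_is_k]] nr2]] by blast
    then show ?thesis using ka2b IH ctx_mono[of "comp (comp x y) k" "comp x (comp y k)" u "valD d"] by simp
  next
    case (exch u x y d)
    then have "le (valS (comp y x)) (valS (comp x y))"
      using le_trans[OF comp1 le_trans[OF e_exch comp2]] by blast
    then show ?thesis using exch IH ctx_mono[of "comp y x" "comp x y" u "valD d"] by simp
  next
    case (contr u x d)
    then have "le (valS x) (valS (comp x x))"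
      using le_trans[OF e_contr comp2] by blast
    then show ?thesis using contr IH ctx_mono[of x "comp x x" u "valD d"] by simp
  next
    case (weak_i u d x)
    then have "le (valS x) (valS None)" using valS_W[of x] by (auto simp: Q_wone)
    then show ?thesis using weak_i IH ctx_mono[of x None u "valD d"] by simp
  next
    case (weak_o x a)
    then have "le (M Zero) (val a)" using val_W[of a] by (auto simp: Q_wzero)
    then show ?thesis using weak_o IH le_trans by auto
  qed
qed

end

fun cc :: "ctx \<Rightarrow> ctx \<Rightarrow> ctx" where
  "cc Hole v = v" | "cc (CL u t) v = CL (cc u v) t" | "cc (CR t u) v = CR t (cc u v)"

lemma fill_cc[simp]: "fill (cc u v) x = fill u (fill v x)"
  by (induction u) auto

definition ctxL :: "str \<Rightarrow> ctx" where "ctxL y = (case y of None \<Rightarrow> Hole | Some t \<Rightarrow> CL Hole t)"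
definition ctxR :: "str \<Rightarrow> ctx" where "ctxR y = (case y of None \<Rightarrow> Hole | Some t \<Rightarrow> CR t Hole)"
lemma fill_ctxL[simp]: "fill (ctxL y) z = comp z y" by (cases y) (auto simp: ctxL_def)
lemma fill_ctxR[simp]: "fill (ctxR y) z = comp y z" by (cases y) (auto simp: ctxR_def)

fun ctx_bf where
  "ctx_bf Hole = True" | "ctx_bf (CL u t) = (ctx_bf u \<and> tree_bf t)" | "ctx_bf (CR t u) = (tree_bf t \<and> ctx_bf u)"
lemma str_bf_fill[simp]: "str_bf (fill u x) = (ctx_bf u \<and> str_bf x)"
  by (induction u) auto

lemma bf_rho_t[simp]: "bang_free (rho_t t) = tree_bf t" by (induction t) auto

lemma bf_rho[simp]: "str_bf y \<Longrightarrow> bang_free (rho y)" by (cases y) (auto simp: rho_def)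

lemma der_rho_t: "bg \<or> tree_bf t \<Longrightarrow> der bg cy R S (Some t, Some (rho_t t))"
proof (induction t)
  case (Leaf a) then show ?case by (auto intro: der_id)
next
  case (Node s t)
  then have "der bg cy R S (comp (Some s) (Some t), Some (Dot (rho_t s) (rho_t t)))"
    by (intro der_dot_r) auto
  then show ?case by simp
qed

lemma der_rho: "bg \<or> str_bf x \<Longrightarrow> der bg cy R S (x, Some (rho x))"
  by (cases x) (auto simp: rho_def der_one der_rho_t)

lemma der_dotl_ctx: "der False cy R S (fill u (Some t), d) \<Longrightarrow> der False cy R S (fill u (fml (rho_t t)), d)"
proof (induction t arbitrary: u)
  case (Leaf a) then show ?case by simp
next
  case (Node s t)
  have "der False cy R S (fill (cc u (CL Hole t)) (Some s), d)" using Node.prems by simp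
  then have "der False cy R S (fill (cc u (CL Hole t)) (fml (rho_t s)), d)" using Node.IH(1) by blast
  then have "der False cy R S (fill (cc u (CR (Leaf (rho_t s)) Hole)) (Some t), d)" by simp
  then have h: "der False cy R S (fill (cc u (CR (Leaf (rho_t s)) Hole)) (fml (rho_t t)), d)" using Node.IH(2) by blast
  then have h': "der False cy R S (fill u (comp (fml (rho_t s)) (fml (rho_t t))), d)" by simp
  show ?case
    by (rule rs1[OF rule_inst.dot_l[where u=u and a="rho_t s" and b="rho_t t" and d=d]])
      (use h' der_bf[OF h'] in \<open>auto simp: seq_bf_def split: option.splits\<close>)
qed

lemma der_to_D: "der False cy R S (y, d) \<Longrightarrow> der False cy R S (fml (rho y), Some (theta d))"
proof -
  assume h: "der False cy R S (y, d)"
  have h1: "der False cy R S (fml (rho y), d)"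
  proof (cases y)
    case None
    show ?thesis
      by (rule rs1[OF rule_inst.one_l[where u=Hole and d=d]])
        (use h der_bf[OF h] None in \<open>auto simp: rho_def seq_bf_def split: option.splits\<close>)
  next
    case (Some t)
    then show ?thesis using der_dotl_ctx[of cy R S Hole t d] h by (simp add: rho_def)
  qed
  show ?thesis
  proof (cases d)
    case None
    show ?thesis
      by (rule rs1[OF rule_inst.zero_r]) (use h1 der_bf[OF h1] None in \<open>auto simp: theta_def\<close>)
  next
    case (Some a) then show ?thesis using h1 by (simp add: theta_def)
  qed
qed

lemma D_to_der: "str_bf x \<Longrightarrow> der False cy R S (fml (rho x), Some (theta d)) \<Longrightarrow> der False cy R S (x, d)"
proof -
  assume bx: "str_bf x" and h: "der False cy R S (fml (rho x), Some (theta d))"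
  have h2: "der False cy R S (x, Some (theta d))"
    by (rule cutH[OF der_rho]) (use bx h der_bf[OF h] in auto)
  show ?thesis
  proof (cases d)
    case None
    have "der False cy R S (x, None)" by (rule cutH[OF _ der_zero]) (use h2 bx None in \<open>auto simp: theta_def\<close>)
    with None show ?thesis by simp
  next
    case (Some a) then show ?thesis using h2 by (simp add: theta_def)
  qed
qed

lemma k_tree_nest: "ss \<noteq> [] \<Longrightarrow> k_tree (nest ss)"
  by (induction ss rule: nest.induct) (auto simp: tau_def)

context L begin

lemma val_bf: "bang_free a \<Longrightarrow> val a = M a"
  by (induction a) auto
lemma valT_bf: "tree_bf t \<Longrightarrow> valT t = M (rho_t t)"
  by (induction t) (auto simp: val_bf)
lemma valS_bf: "str_bf x \<Longrightarrow> valS x = M (rho x)"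
  by (cases x) (auto simp: valT_bf rho_def)
lemma valD_bf: "seq_bf (x, d) \<Longrightarrow> valD d = M (theta d)"
  by (cases d) (auto simp: val_bf theta_def)

lemma tau_one: assumes "s \<in> S" "seq_bf s" shows "val (tau s) = M One"
proof -
  obtain y d where s: "s = (y, d)" by (cases s)
  have bf: "str_bf y" "bang_free (theta d)" using assms(2) s
    by (auto simp: theta_def seq_bf_def split: option.splits)
  have "der False cy R S s" using assms by (intro der.hyp) auto
  then have "D (rho y) (theta d)" using der_to_D s by simp
  then have "D (Dot (rho y) One) (theta d)" using D_trans[OF D_unitr1] D_bf by blast
  then have "D One (Ldiv (rho y) (theta d))" using D_res_l by blast
  then have "le (M One) (val (Ldiv (rho y) (theta d)))"
    using bf by (simp add: val_bf Q_def st_id)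
  then show ?thesis by (simp add: tau_def s)
qed

lemma nest_one: "ss \<noteq> [] \<Longrightarrow> \<forall>s\<in>set ss. s \<in> S \<and> seq_bf s \<Longrightarrow> le (M One) (valT (nest ss))"
proof (induction ss rule: nest.induct)
  case 1 then show ?case by simp
next
  case (2 s) then show ?case by (simp add: tau_one)
next
  case (3 s t ts)
  then have "le (M One) (valT (nest (t # ts)))" by simp
  then have "le (mul (M One) (M One)) (mul (val (tau s)) (valT (nest (t # ts))))"
    using 3 by (intro mul_mono) (auto simp: tau_one)
  then show ?case using le_trans[OF unit_l2] by simp
qed

lemma partB:
  assumes "ss \<noteq> []" "\<forall>s\<in>set ss. s \<in> S \<and> seq_bf s" "seq_bf (x, d)"
    and "der True cy R {} (comp x (Some (nest ss)), d)"
  shows "der False cy R S (x, d)"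
proof -
  have bx: "str_bf x" using assms(3) by (auto simp: seq_bf_def)
  have "le (valS (comp x (Some (nest ss)))) (valD d)" using sound[OF assms(4)] by simp
  then have h: "le (mul (valS x) (valT (nest ss))) (valD d)" by (simp add: comp_le_iff)
  have "le (mul (valS x) (M One)) (mul (valS x) (valT (nest ss)))"
    by (rule mul_mono[OF le_refl nest_one[OF assms(1,2)]])
  then have "le (valS x) (valD d)" using le_trans[OF unit_r2 le_trans[OF _ h]] by blast
  then have "Q (rho x) (theta d)" using valS_bf[OF bx] valD_bf[OF assms(3)] by simp
  then have "D (rho x) (theta d)" using assms(3) bx
    by (auto simp: Q_def st_id rho_def theta_def seq_bf_def split: option.splits)
  then show ?thesis using D_to_der[OF bx] by simp
qed

end

lemma bg_mono: "rule_inst False cy R ps s \<Longrightarrow> rule_inst True cy R ps s"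
  by (induction rule: rule_inst.induct) (auto intro: rule_inst.intros[simplified])

lemma ke1': "is_k k \<Longrightarrow> der True cy R S (fill u (comp k y), d) \<Longrightarrow> der True cy R S (fill u (comp y k), d)"
  using der.rule[OF rule_inst.ke1[where bg=True and cy=cy and R=R and k=k and u=u and y=y and d=d]] by auto
lemma ke2': "is_k k \<Longrightarrow> der True cy R S (fill u (comp y k), d) \<Longrightarrow> der True cy R S (fill u (comp k y), d)"
  using der.rule[OF rule_inst.ke2[where bg=True and cy=cy and R=R and k=k and u=u and y=y and d=d]] by auto
lemma ka1a': "is_k k \<Longrightarrow> der True cy R S (fill u (comp (comp k y) z), d) \<Longrightarrow> der True cy R S (fill u (comp k (comp y z)), d)"
  using der.rule[OF rule_inst.ka1a[where bg=True and cy=cy and R=R and k=k and u=u and y=y and z=z and d=d]] by auto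
lemma ka1b': "is_k k \<Longrightarrow> der True cy R S (fill u (comp k (comp y z)), d) \<Longrightarrow> der True cy R S (fill u (comp (comp k y) z), d)"
  using der.rule[OF rule_inst.ka1b[where bg=True and cy=cy and R=R and k=k and u=u and y=y and z=z and d=d]] by auto
lemma ka2a': "is_k k \<Longrightarrow> der True cy R S (fill u (comp (comp x y) k), d) \<Longrightarrow> der True cy R S (fill u (comp x (comp y k)), d)"
  using der.rule[OF rule_inst.ka2a[where bg=True and cy=cy and R=R and k=k and u=u and x=x and y=y and d=d]] by auto
lemma ka2b': "is_k k \<Longrightarrow> der True cy R S (fill u (comp x (comp y k)), d) \<Longrightarrow> der True cy R S (fill u (comp (comp x y) k), d)"
  using der.rule[OF rule_inst.ka2b[where bg=True and cy=cy and R=R and k=k and u=u and x=x and y=y and d=d]] by auto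
lemma kw': "is_k k \<Longrightarrow> der True cy R S (fill u None, d) \<Longrightarrow> der True cy R S (fill u k, d)"
  using der.rule[OF rule_inst.kw[where bg=True and cy=cy and R=R and k=k and u=u and d=d]] by auto
lemma kc': "is_k k \<Longrightarrow> der True cy R S (fill u (comp k k), d) \<Longrightarrow> der True cy R S (fill u k, d)"
  using der.rule[OF rule_inst.kc[where bg=True and cy=cy and R=R and k=k and u=u and d=d]] by auto

lemma SW: assumes "is_k K" "der True cy R S (fill w (comp (comp x K) Y), d)"
  shows "der True cy R S (fill w (comp (comp x Y) K), d)"
proof -
  have "der True cy R S (fill (cc w (ctxL Y)) (comp x K), d)" using assms(2) by simp
  then have "der True cy R S (fill (cc w (ctxL Y)) (comp K x), d)" by (rule ke2'[OF assms(1)])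
  then have "der True cy R S (fill w (comp (comp K x) Y), d)" by simp
  then have "der True cy R S (fill w (comp K (comp x Y)), d)" by (rule ka1a'[OF assms(1)])
  then show ?thesis by (rule ke1'[OF assms(1)])
qed

lemma SW': assumes "is_k K" "der True cy R S (fill w (comp (comp x Y) K), d)"
  shows "der True cy R S (fill w (comp (comp x K) Y), d)"
proof -
  have "der True cy R S (fill w (comp K (comp x Y)), d)" by (rule ke2'[OF assms(1,2)])
  then have "der True cy R S (fill w (comp (comp K x) Y), d)" by (rule ka1b'[OF assms(1)])
  then have "der True cy R S (fill (cc w (ctxL Y)) (comp K x), d)" by simp
  then have "der True cy R S (fill (cc w (ctxL Y)) (comp x K), d)" by (rule ke1'[OF assms(1)])
  then show ?thesis by simp
qed

lemma H1: "is_k K \<Longrightarrow> der True cy R S (fill w (fill u (comp X K)), d) \<Longrightarrow> der True cy R S (fill w (comp (fill u X) K), d)"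
proof (induction u arbitrary: w)
  case Hole then show ?case by simp
next
  case (CL u t)
  have "der True cy R S (fill (cc w (CL Hole t)) (fill u (comp X K)), d)" using CL.prems by simp
  then have "der True cy R S (fill (cc w (CL Hole t)) (comp (fill u X) K), d)" using CL.IH CL.prems(1) by blast
  then have "der True cy R S (fill w (comp (comp (fill u X) K) (Some t)), d)" by simp
  then have "der True cy R S (fill w (comp (comp (fill u X) (Some t)) K), d)" by (rule SW[OF CL.prems(1)])
  then show ?case by simp
next
  case (CR t u)
  have "der True cy R S (fill (cc w (CR t Hole)) (fill u (comp X K)), d)" using CR.prems by simp
  then have "der True cy R S (fill (cc w (CR t Hole)) (comp (fill u X) K), d)" using CR.IH CR.prems(1) by blast
  then have "der True cy R S (fill w (comp (Some t) (comp (fill u X) K)), d)" by simp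
  then have "der True cy R S (fill w (comp (comp (Some t) (fill u X)) K), d)" by (rule ka2b'[OF CR.prems(1)])
  then show ?case by simp
qed

lemma H2: assumes "is_k K" "der True cy R S (fill w (comp (comp A K) K), d)"
  shows "der True cy R S (fill w (comp A K), d)"
proof -
  have "der True cy R S (fill w (comp A (comp K K)), d)" by (rule ka2a'[OF assms])
  then have "der True cy R S (fill (cc w (ctxR A)) (comp K K), d)" by simp
  then have "der True cy R S (fill (cc w (ctxR A)) K, d)" by (rule kc'[OF assms(1)])
  then show ?thesis by simp
qed

lemma H3: assumes "is_k K" "der True cy R S (comp (fill u (comp X K)) K, d)"
  shows "der True cy R S (comp (fill u X) K, d)"
proof -
  have "der True cy R S (fill (ctxL K) (fill u (comp X K)), d)" using assms(2) by simp
  then have "der True cy R S (fill (ctxL K) (comp (fill u X) K), d)" by (rule H1[OF assms(1)])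
  then have "der True cy R S (fill Hole (comp (comp (fill u X) K) K), d)" by simp
  then have "der True cy R S (fill Hole (comp (fill u X) K), d)" by (rule H2[OF assms(1)])
  then show ?thesis by simp
qed

lemma AX: "is_k K \<Longrightarrow> der True cy R S (y, d) \<Longrightarrow> der True cy R S (comp y K, d)"
  using kw'[of K cy R S "ctxR y" d] by simp


lemma nestW: "s \<in> set ss \<Longrightarrow> der True cy R S (fill u (fml (tau s)), d) \<Longrightarrow> der True cy R S (fill u (Some (nest ss)), d)"
proof (induction ss arbitrary: u rule: nest.induct)
  case 1 then show ?case by simp
next
  case (2 s0) then show ?case by simp
next
  case (3 s0 t ts)
  have isK: "is_k (Some (nest (t # ts)))" using k_tree_nest[of "t # ts"] by (simp add: is_k_def)
  have isK0: "is_k (fml (tau s0))" by (simp add: is_k_def tau_def)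
  show ?case
  proof (cases "s = s0")
    case True
    then have "der True cy R S (fill (cc u (CR (Leaf (tau s0)) Hole)) None, d)" using 3 by simp
    then have "der True cy R S (fill (cc u (CR (Leaf (tau s0)) Hole)) (Some (nest (t # ts))), d)"
      by (rule kw'[OF isK])
    then show ?thesis by simp
  next
    case False
    then have s: "s \<in> set (t # ts)" using 3 by simp
    have "der True cy R S (fill (cc u (CL Hole (Leaf (tau s)))) None, d)" using 3 by simp
    then have "der True cy R S (fill (cc u (CL Hole (Leaf (tau s)))) (fml (tau s0)), d)"
      by (rule kw'[OF isK0])
    then have "der True cy R S (fill (cc u (CR (Leaf (tau s0)) Hole)) (fml (tau s)), d)" by simp
    then have "der True cy R S (fill (cc u (CR (Leaf (tau s0)) Hole)) (Some (nest (t # ts))), d)"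
      using 3(1) s by blast
    then show ?thesis by simp
  qed
qed

lemma hypA: "s \<in> set ss \<Longrightarrow> der True cy R S (comp (fst s) (Some (nest ss)), snd s)"
proof -
  assume sin: "s \<in> set ss"
  obtain y d where s: "s = (y, d)" by (cases s)
  have h0: "der True cy R S (fml (theta d), d)"
    by (cases d) (auto simp: theta_def der_zero intro: der_id)
  have h1: "der True cy R S (comp y (fml (Ldiv (rho y) (theta d))), d)"
    by (rule rs2[OF rule_inst.ldiv_l[where x=y and a="rho y" and u=Hole and b="theta d" and d=d]])
      (use h0 der_rho[of True y cy R S] in auto)
  have h2: "der True cy R S (comp y (fml (tau s)), d)"
    by (rule rs1[OF rule_inst.bang_l[where u="ctxR y" and a="Ldiv (rho y) (theta d)" and d=d]])
      (use h1 in \<open>auto simp: tau_def s\<close>)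
  have "der True cy R S (fill (ctxR y) (Some (nest ss)), d)"
    by (rule nestW[OF sin]) (use h2 in simp)
  then show ?thesis using s by simp
qed

lemma axcase: "rule_inst False cy R [] s \<Longrightarrow> is_k K \<Longrightarrow> der True cy R S (comp (fst s) K, snd s)"
  using AX[OF _ der.rule[OF bg_mono]] by (cases s) auto

lemma partA:
  assumes "der False cy R S s" "\<forall>s\<in>S. der True cy R {} (comp (fst s) K, snd s)" "is_k K"
  shows "der True cy R {} (comp (fst s) K, snd s)"
  using assms(1)
proof (induction rule: der.induct)
  case (hyp s) then show ?case using assms(2) by blast
next
  case (rule ps s)
  have IH: "\<forall>p\<in>set ps. der True cy R {} (comp (fst p) K, snd p)" using rule by fastforce
  have ax: "ps = [] \<Longrightarrow> der True cy R {} (comp (fst s) K, snd s)"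
    using axcase[OF _ assms(3), of cy R s] rule(1) by simp
  note isK = assms(3)
  from rule(1) IH show ?case
  proof cases
    case ax_id then show ?thesis using ax by simp
  next
    case ax_one then show ?thesis using ax by simp
  next
    case ax_zero then show ?thesis using ax by simp
  next
    case ax_dn1 then show ?thesis using ax by simp
  next
    case ax_dn2 then show ?thesis using ax by simp
  next
    case ax_cd1 then show ?thesis using ax by simp
  next
    case ax_cd2 then show ?thesis using ax by simp
  next
    case ax_cy1 then show ?thesis using ax by simp
  next
    case ax_cy2 then show ?thesis using ax by simp
  next
    case (cut x a u d)
    have "der True cy R {} (fill (cc (ctxL K) u) (comp x K), d)"
      by (rule rs2[OF rule_inst.cut[where x="comp x K" and a=a and u="cc (ctxL K) u" and d=d]])
        (use IH cut in auto)
    then have "der True cy R {} (comp (fill u (comp x K)) K, d)" by simp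
    then show ?thesis using H3[OF isK] cut by simp
  next
    case (one_l u d)
    have "der True cy R {} (fill (cc (ctxL K) u) (fml One), d)"
      by (rule rs1[OF rule_inst.one_l[where u="cc (ctxL K) u" and d=d]]) (use IH one_l in auto)
    then show ?thesis using one_l by simp
  next
    case (zero_r x)
    show ?thesis by (rule rs1[OF rule_inst.zero_r[where x="comp x K"]]) (use IH zero_r in auto)
  next
    case (ldiv_l x a u b d)
    have "der True cy R {} (fill (cc (ctxL K) u) (comp (comp x K) (fml (Ldiv a b))), d)"
      by (rule rs2[OF rule_inst.ldiv_l[where x="comp x K" and a=a and u="cc (ctxL K) u" and b=b and d=d]])
        (use IH ldiv_l in auto)
    then have "der True cy R {} (fill (cc (ctxL K) u) (comp (comp x (fml (Ldiv a b))) K), d)"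
      by (rule SW[OF isK])
    then have "der True cy R {} (comp (fill u (comp (comp x (fml (Ldiv a b))) K)) K, d)" by simp
    then show ?thesis using H3[OF isK] ldiv_l by simp
  next
    case (ldiv_r a x b)
    have "der True cy R {} (fill Hole (comp (comp (fml a) x) K), Some b)" using IH ldiv_r by simp
    then have "der True cy R {} (fill Hole (comp (fml a) (comp x K)), Some b)" by (rule ka2a'[OF isK])
    then have "der True cy R {} (comp x K, Some (Ldiv a b))"
      by - (rule rs1[OF rule_inst.ldiv_r[where a=a and x="comp x K" and b=b]], auto)
    then show ?thesis using ldiv_r by simp
  next
    case (rdiv_l x a u b d)
    have "der True cy R {} (fill (cc (ctxL K) u) (comp (fml (Rdiv b a)) (comp x K)), d)"
      by (rule rs2[OF rule_inst.rdiv_l[where x="comp x K" and a=a and u="cc (ctxL K) u" and b=b and d=d]])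
        (use IH rdiv_l in auto)
    then have "der True cy R {} (fill (cc (ctxL K) u) (comp (comp (fml (Rdiv b a)) x) K), d)"
      by (rule ka2b'[OF isK])
    then have "der True cy R {} (comp (fill u (comp (comp (fml (Rdiv b a)) x) K)) K, d)" by simp
    then show ?thesis using H3[OF isK] rdiv_l by simp
  next
    case (rdiv_r x a b)
    have "der True cy R {} (fill Hole (comp (comp x (fml a)) K), Some b)" using IH rdiv_r by simp
    then have "der True cy R {} (fill Hole (comp (comp x K) (fml a)), Some b)" by (rule SW'[OF isK])
    then have "der True cy R {} (comp x K, Some (Rdiv b a))"
      by - (rule rs1[OF rule_inst.rdiv_r[where a=a and x="comp x K" and b=b]], auto)
    then show ?thesis using rdiv_r by simp
  next
    case (dot_l u a b d)
    have "der True cy R {} (fill (cc (ctxL K) u) (fml (Dot a b)), d)"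
      by (rule rs1[OF rule_inst.dot_l[where u="cc (ctxL K) u" and a=a and b=b and d=d]]) (use IH dot_l in auto)
    then show ?thesis using dot_l by simp
  next
    case (dot_r x a y b)
    have "der True cy R {} (fill Hole (comp (comp x K) (comp y K)), Some (Dot a b))"
      by (rule rs2[OF rule_inst.dot_r[where x="comp x K" and a=a and y="comp y K" and b=b]])
        (use IH dot_r in auto)
    then have "der True cy R {} (fill Hole (comp (comp x (comp y K)) K), Some (Dot a b))" by (rule SW[OF isK])
    then have "der True cy R {} (fill (ctxL K) (comp x (comp y K)), Some (Dot a b))" by simp
    then have "der True cy R {} (fill (ctxL K) (comp (comp x y) K), Some (Dot a b))" by (rule ka2b'[OF isK])
    then have "der True cy R {} (fill Hole (comp (comp (comp x y) K) K), Some (Dot a b))" by simp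
    then have "der True cy R {} (fill Hole (comp (comp x y) K), Some (Dot a b))" by (rule H2[OF isK])
    then show ?thesis using dot_r by simp
  next
    case (and_l1 u a d b)
    have "der True cy R {} (fill (cc (ctxL K) u) (fml (And a b)), d)"
      by (rule rs1[OF rule_inst.and_l1[where u="cc (ctxL K) u" and a=a and b=b and d=d]]) (use IH and_l1 in auto)
    then show ?thesis using and_l1 by simp
  next
    case (and_l2 u b d a)
    have "der True cy R {} (fill (cc (ctxL K) u) (fml (And a b)), d)"
      by (rule rs1[OF rule_inst.and_l2[where u="cc (ctxL K) u" and a=a and b=b and d=d]]) (use IH and_l2 in auto)
    then show ?thesis using and_l2 by simp
  next
    case (and_r x a b)
    show ?thesis by (rule rs2[OF rule_inst.and_r[where x="comp x K" and a=a and b=b]]) (use IH and_r in auto)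
  next
    case (or_l u a d b)
    have "der True cy R {} (fill (cc (ctxL K) u) (fml (Or a b)), d)"
      by (rule rs2[OF rule_inst.or_l[where u="cc (ctxL K) u" and a=a and b=b and d=d]]) (use IH or_l in auto)
    then show ?thesis using or_l by simp
  next
    case (or_r1 x a b)
    show ?thesis by (rule rs1[OF rule_inst.or_r1[where x="comp x K" and a=a and b=b]]) (use IH or_r1 in auto)
  next
    case (or_r2 x b a)
    show ?thesis by (rule rs1[OF rule_inst.or_r2[where x="comp x K" and a=a and b=b]]) (use IH or_r2 in auto)
  next
    case bang_l then show ?thesis by simp
  next
    case bang_r then show ?thesis by simp
  next
    case kw then show ?thesis by simp
  next
    case kc then show ?thesis by simp
  next
    case ke1 then show ?thesis by simp
  next
    case ke2 then show ?thesis by simp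
  next
    case ka1a then show ?thesis by simp
  next
    case ka1b then show ?thesis by simp
  next
    case ka2a then show ?thesis by simp
  next
    case ka2b then show ?thesis by simp
  next
    case (exch u x y d)
    have "der True cy R {} (fill (cc (ctxL K) u) (comp y x), d)"
      by (rule rs1[OF rule_inst.exch[where u="cc (ctxL K) u" and x=x and y=y and d=d]]) (use IH exch in auto)
    then show ?thesis using exch by simp
  next
    case (contr u x d)
    have "der True cy R {} (fill (cc (ctxL K) u) x, d)"
      by (rule rs1[OF rule_inst.contr[where u="cc (ctxL K) u" and x=x and d=d]]) (use IH contr in auto)
    then show ?thesis using contr by simp
  next
    case (weak_i u d x)
    have "der True cy R {} (fill (cc (ctxL K) u) x, d)"
      by (rule rs1[OF rule_inst.weak_i[where u="cc (ctxL K) u" and x=x and d=d]]) (use IH weak_i in auto)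
    then show ?thesis using weak_i by simp
  next
    case (weak_o x a)
    show ?thesis by (rule rs1[OF rule_inst.weak_o[where x="comp x K" and a=a]]) (use IH weak_o in auto)
  qed
qed

theorem mainTheorem19:
  fixes R :: "srule set" and ss :: "seq list" and x :: str and \<delta> :: "fm option"
  assumes "ss \<noteq> []"
    and "\<forall>s\<in>set ss. seq_bf s"
    and "seq_bf (x, \<delta>)"
  shows "(InFNL R (set ss) (x, \<delta>) \<longleftrightarrow> NACCLLm R (comp x (Some (nest ss)), \<delta>))
       \<and> (CyInFNL R (set ss) (x, \<delta>) \<longleftrightarrow> NACCLL R (comp x (Some (nest ss)), \<delta>))"
proof -
  have isK: "is_k (Some (nest ss))" using k_tree_nest[OF assms(1)] by (simp add: is_k_def)
  have eq: "der False cy R (set ss) (x, \<delta>) \<longleftrightarrow> der True cy R {} (comp x (Some (nest ss)), \<delta>)" for cy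
  proof
    assume "der False cy R (set ss) (x, \<delta>)"
    from partA[OF this _ isK] show "der True cy R {} (comp x (Some (nest ss)), \<delta>)"
      using hypA by auto
  next
    assume "der True cy R {} (comp x (Some (nest ss)), \<delta>)"
    then show "der False cy R (set ss) (x, \<delta>)"
      using L.partB[OF assms(1) _ assms(3)] assms(2) by blast
  qed
  show ?thesis unfolding InFNL_def CyInFNL_def NACCLLm_def NACCLL_def using eq by blast
qed


end
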